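(* Let $K,D,U$ be integers with $0\le U\le D$ and $U+D\le K-2$, and let $\mathbb{F}_q$ be any finite field. Consider the two-sided single unicast index coding problem with symmetric neighboring and consecutive side-information with $K$ messages $x_0,\dots,x_{K-1}$ and $K$ receivers $R_0,\dots,R_{K-1}$, where $R_k$ wants $x_k$ and has side-information $$\mathcal{K}_k=\{x_{k-U},\dots,x_{k-1}\}\cup\{x_{k+1},\dots,x_{k+D}\}$$ (indices modulo $K$). Let $$a=\gcd(K,\,D-U,\,U+1),\qquad u_a=\frac{U+1}{a},\qquad \Delta_a=\frac{D-U}{a},\qquad K_a=\frac{K}{a}.$$ Let each message be a vector $x_k=(x_{k,1},\dots,x_{k,u_a})\in\mathbb{F}_q^{u_a}$. For $s\in[0:K_a-1]$ define $$y_s=\sum_{i=1}^{u_a}\sum_{j=0}^{a-1}x_{a(s+1-i)+j,\,i}\in\mathbb{F}_q$$ (first subscripts modulo $K$). Let $\mathbf{L}$ be the AIR matrix of size $K_a\times(K_a-\Delta_a)$ and $L_s$ its $s$-th row ($s\in[0:K_a-1]$). Then the code $$[c_0~c_1~\cdots~c_{K_a-\Delta_a-1}]=\sum_{s=0}^{K_a-1}y_sL_s$$ is an optimal length $u_a$-dimensional vector linear index code for this problem: every receiver $R_k$ can decode its wanted message vector $x_k$ from the $K_a-\Delta_a$ broadcast symbols $c_0,\dots,c_{K_a-\Delta_a-1}$ and its side-information, and the code achieves rate $\frac{u_a}{K_a-\Delta_a}=\frac{U+1}{K-D+U}$, which equals the symmetric capacity of the problem.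
   Context: Index coding: a transmitter holds messages $x_0,\dots,x_{K-1}$, each $x_k\in\mathbb{F}_q^{p}$ (a $p$-dimensional vector index code; $p=1$ is scalar). A linear index code of length $N$ is an $\mathbb{F}_q$-linear map $\mathbb{F}_q^{pK}\to\mathbb{F}_q^{N}$; its image symbols $c_0,\dots,c_{N-1}$ are broadcast over a noiseless channel. Receiver $R_k$ decodes if $x_k$ is determined (linearly) by the broadcast symbols together with the messages in its side-information set $\mathcal{K}_k$. The rate is $p/N$. For the problem above with $U+D\le K-2$, the symmetric capacity is $\frac{U+1}{K-D+U}$ symbols per message, and an index code is of optimal length if its rate equals this capacity. AIR matrix: for integers $m\ge n\ge 1$, the $m\times n$ binary matrix $\mathbf{L}_{m\times n}$ (entries $0,1$ regarded in $\mathbb{F}_q$) is built as follows. For $d\mid c$, let $\mathbf{I}_{c\times d}$ be the $c\times d$ matrix consisting of $c/d$ copies of the identity $\mathbf{I}_d$ stacked vertically, and $\mathbf{I}_{d\times c}$ its transpose. Start with an empty $m\times n$ matrix whose "unfilled part" is the whole matrix, of size $m\times n$. Step 1: write $m=qn+r$ with $0\le r<n$; fill the first $qn$ rows of the unfilled part with $\mathbf{I}_{qn\times n}$; the unfilled part is now its last $r$ rows (size $r\times n$); if $r=0$ stop. Step 2: write $n=q'r+r'$ with $0\le r'<r$; fill the first $q'r$ columns of the unfilled part with $\mathbf{I}_{r\times q'r}$ (i.e. $q'$ copies of $\mathbf{I}_r$ side by side); the unfilled part is now its last $r'$ columns (size $r\times r'$); if $r'=0$ stop; otherwise set $m\leftarrow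 r$, $n\leftarrow r'$ and return to Step 1. The resulting matrix is the AIR matrix of size $m\times n$. *)

theory Defs
  imports Complex_Main
begin

text \<open>AIR matrix.  air_ent m n r c is True iff entry (r,c) (0-based row r < m,
  column c < n) of the m x n AIR matrix is 1, following the recursive
  construction (Step 1: stacked identities I_n in the first (m div n)*n rows;
  Step 2: side-by-side identities I_rr in the first ((n div rr)*rr) columns of
  the remaining rr = m mod n rows; then recurse on the rr x (n mod rr) block).\<close>

function air_ent :: "nat \<Rightarrow> nat \<Rightarrow> nat \<Rightarrow> nat \<Rightarrow> bool" where
  "air_ent m n r c =
     (if n = 0 \<or> r \<ge> m \<or> c \<ge> n then False
      else if r < (m div n) * n then r mod n = c
      else (let rr = m mod n; r' = r - (m div n) * n in
            if rr = 0 then False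
            else if c < (n div rr) * rr then c mod rr = r'
            else air_ent rr (n mod rr) r' (c - (n div rr) * rr)))"
  by pat_completeness auto
lemma air_term_aux:
  fixes m n :: nat
  assumes "0 < n" "m mod n \<noteq> 0"
  shows "m mod n + n mod (m mod n) < m + n"
proof -
  have "m mod n < n" "n mod (m mod n) < m mod n" "m mod n \<le> m" using assms by auto
  then show ?thesis by linarith
qed

termination
  by (relation "measure (\<lambda>(m,n,r,c). m + n)")
     (auto simp: Let_def intro!: air_term_aux)

definition AIR :: "nat \<Rightarrow> nat \<Rightarrow> nat \<Rightarrow> nat \<Rightarrow> 'a::field" where
  "AIR m n r c = (if air_ent m n r c then 1 else 0)"

definition par_a :: "nat \<Rightarrow> nat \<Rightarrow> nat \<Rightarrow> nat" where
  "par_a K D U = gcd K (gcd (D - U) (U + 1))"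

definition u_a :: "nat \<Rightarrow> nat \<Rightarrow> nat \<Rightarrow> nat" where
  "u_a K D U = (U + 1) div par_a K D U"
definition Delta_a :: "nat \<Rightarrow> nat \<Rightarrow> nat \<Rightarrow> nat" where
  "Delta_a K D U = (D - U) div par_a K D U"
definition K_a :: "nat \<Rightarrow> nat \<Rightarrow> nat \<Rightarrow> nat" where
  "K_a K D U = K div par_a K D U"

definition side_info :: "nat \<Rightarrow> nat \<Rightarrow> nat \<Rightarrow> nat \<Rightarrow> nat set" where
  "side_info K D U k =
     {nat ((int k - int t) mod int K) | t. 1 \<le> t \<and> t \<le> U} \<union>
     {(k + t) mod K | t. 1 \<le> t \<and> t \<le> D}"

text \<open>Messages: x k i is the i-th component (i in 1..u_a) of message x_k (k < K).
  y_s = sum_{i=1}^{u_a} sum_{j=0}^{a-1} x_{a(s+1-i)+j, i}, first index mod K.\<close>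
definition y_sym :: "nat \<Rightarrow> nat \<Rightarrow> nat \<Rightarrow> (nat \<Rightarrow> nat \<Rightarrow> 'a::field) \<Rightarrow> nat \<Rightarrow> 'a" where
  "y_sym K D U x s =
     (\<Sum>i\<in>{1..u_a K D U}. \<Sum>j<par_a K D U.
        x (nat ((int (par_a K D U) * (int s + 1 - int i) + int j) mod int K)) i)"

definition code_sym :: "nat \<Rightarrow> nat \<Rightarrow> nat \<Rightarrow> (nat \<Rightarrow> nat \<Rightarrow> 'a::field) \<Rightarrow> nat \<Rightarrow> 'a" where
  "code_sym K D U x t =
     (\<Sum>s<K_a K D U. y_sym K D U x s *
        AIR (K_a K D U) (K_a K D U - Delta_a K D U) s t)"

definition lin_decodable ::
  "'a::field itself \<Rightarrow> nat \<Rightarrow> nat \<Rightarrow> nat \<Rightarrow> nat \<Rightarrow> bool" where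
  "lin_decodable _ K D U k \<longleftrightarrow>
     (\<forall>i\<in>{1..u_a K D U}. \<exists>(\<alpha>::nat \<Rightarrow> 'a) (\<beta>::nat \<Rightarrow> nat \<Rightarrow> 'a).
        \<forall>x::nat \<Rightarrow> nat \<Rightarrow> 'a. x k i =
          (\<Sum>t<K_a K D U - Delta_a K D U. \<alpha> t * code_sym K D U x t) +
          (\<Sum>j\<in>side_info K D U k. \<Sum>l\<in>{1..u_a K D U}. \<beta> j l * x j l))"

end

theory Submission
  imports Defs "HOL-Library.FuncSet"
begin


definition ns :: "(nat \<Rightarrow> nat \<Rightarrow> 'a::field) \<Rightarrow> nat set \<Rightarrow> nat set \<Rightarrow> bool" where
  "ns A W C \<longleftrightarrow> (\<forall>\<alpha>. (\<forall>p\<in>W. (\<Sum>c\<in>C. A p c * \<alpha> c) = 0) \<longrightarrow> (\<forall>c\<in>C. \<alpha> c = 0))"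

lemma unit_sum:
  assumes "finite C" "c \<in> C" "\<forall>c'\<in>C. A p c' = (if c' = c then 1 else 0)"
  shows "(\<Sum>c'\<in>C. A p c' * \<alpha> c') = (\<alpha> c :: 'a::field)"
proof -
  have "(\<Sum>c'\<in>C. A p c' * \<alpha> c') = (\<Sum>c'\<in>C. if c' = c then \<alpha> c' else 0)"
    using assms(3) by (intro sum.cong) auto
  also have "\<dots> = \<alpha> c" using assms(1,2) by (simp add: sum.delta)
  finally show ?thesis .
qed

lemma ns_id:
  assumes "finite C" "\<forall>c\<in>C. \<exists>p\<in>W. \<forall>c'\<in>C. A p c' = (if c' = c then 1 else 0)"
  shows "ns A W C"
  unfolding ns_def
proof (intro allI impI ballI)
  fix \<alpha> c assume h: "\<forall>p\<in>W. (\<Sum>c\<in>C. A p c * \<alpha> c) = 0" and c: "c \<in> C"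
  obtain p where p: "p \<in> W" "\<forall>c'\<in>C. A p c' = (if c' = c then 1 else 0)" using bspec[OF assms(2) c] by (erule bexE)
  have e: "(\<Sum>c'\<in>C. A p c' * \<alpha> c') = \<alpha> c" using unit_sum[of C c A p \<alpha>] assms(1) c p(2) by blast
  have "(\<Sum>c'\<in>C. A p c' * \<alpha> c') = 0" using h p(1) by blast
  thus "\<alpha> c = 0" using e by simp
qed

lemma ns_empty: "ns A W {}" by (simp add: ns_def)

lemma ns_mono: "W \<subseteq> W' \<Longrightarrow> ns A W C \<Longrightarrow> ns A W' C"
  unfolding ns_def by (meson subsetD)

lemma ns_elimA:
  assumes "finite C" "R \<subseteq> C" "\<forall>c\<in>R. \<exists>p\<in>W. \<forall>c'\<in>C. A p c' = (if c' = c then 1 else 0)"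
    "W2 \<subseteq> W" "ns A W2 (C - R)"
  shows "ns A W C"
  unfolding ns_def
proof (intro allI impI ballI)
  fix \<alpha> c assume h: "\<forall>p\<in>W. (\<Sum>c\<in>C. A p c * \<alpha> c) = 0" and c: "c \<in> C"
  have R0: "\<alpha> c' = 0" if cR: "c' \<in> R" for c'
  proof -
    obtain p where p: "p \<in> W" "\<forall>c''\<in>C. A p c'' = (if c'' = c' then 1 else 0)" using bspec[OF assms(3) cR] by (erule bexE)
    have e: "(\<Sum>c''\<in>C. A p c'' * \<alpha> c'') = \<alpha> c'" by (rule unit_sum[of C c' A p \<alpha>]) (use assms(1,2) p(2) cR in auto)
    have "(\<Sum>c''\<in>C. A p c'' * \<alpha> c'') = 0" using h p(1) by blast
    thus ?thesis using e by simp
  qed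
  have "\<forall>p\<in>W2. (\<Sum>c\<in>C - R. A p c * \<alpha> c) = 0"
  proof
    fix p assume p: "p \<in> W2"
    have "(\<Sum>c\<in>C. A p c * \<alpha> c) = (\<Sum>c\<in>C - R. A p c * \<alpha> c) + (\<Sum>c\<in>R. A p c * \<alpha> c)"
      using sum.subset_diff[OF assms(2) assms(1), of "\<lambda>c. A p c * \<alpha> c"] by (simp add: add.commute)
    moreover have "(\<Sum>c\<in>R. A p c * \<alpha> c) = 0" using R0 by simp
    moreover have "(\<Sum>c\<in>C. A p c * \<alpha> c) = 0" using h p assms(4) by blast
    ultimately show "(\<Sum>c\<in>C - R. A p c * \<alpha> c) = 0" by simp
  qed
  hence "\<forall>c\<in>C - R. \<alpha> c = 0" using assms(5)[unfolded ns_def, THEN spec[of _ \<alpha>]] by blast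
  thus "\<alpha> c = 0" using R0 c by blast
qed

lemma ns_elimB:
  assumes "finite C1" "finite C2" "C1 \<inter> C2 = {}" "W2 \<subseteq> W"
    "\<forall>p\<in>W2. \<forall>c\<in>C1. A p c = 0" "ns A W2 C2"
    "\<forall>c\<in>C1. \<exists>p\<in>W. \<forall>c'\<in>C1. A p c' = (if c' = c then 1 else 0)"
  shows "ns A W (C1 \<union> C2)"
  unfolding ns_def
proof (intro allI impI ballI)
  fix \<alpha> c assume h: "\<forall>p\<in>W. (\<Sum>c\<in>C1 \<union> C2. A p c * \<alpha> c) = 0" and c: "c \<in> C1 \<union> C2"
  have split: "(\<Sum>c\<in>C1 \<union> C2. A p c * \<alpha> c) = (\<Sum>c\<in>C1. A p c * \<alpha> c) + (\<Sum>c\<in>C2. A p c * \<alpha> c)" for p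
    using assms(1-3) by (simp add: sum.union_disjoint)
  have "\<forall>p\<in>W2. (\<Sum>c\<in>C2. A p c * \<alpha> c) = 0"
  proof
    fix p assume p: "p \<in> W2"
    have "(\<Sum>c\<in>C1. A p c * \<alpha> c) = 0" using assms(5) p by simp
    thus "(\<Sum>c\<in>C2. A p c * \<alpha> c) = 0" using h split[of p] p assms(4) by auto
  qed
  hence Z2: "\<forall>c\<in>C2. \<alpha> c = 0" using assms(6)[unfolded ns_def, THEN spec[of _ \<alpha>]] by blast
  show "\<alpha> c = 0"
  proof (cases "c \<in> C2")
    case True thus ?thesis using Z2 by blast
  next
    case False
    hence c1: "c \<in> C1" using c by blast
    obtain p where p: "p \<in> W" "\<forall>c'\<in>C1. A p c' = (if c' = c then 1 else 0)" using bspec[OF assms(7) c1] by (erule bexE)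
    have "(\<Sum>c\<in>C2. A p c * \<alpha> c) = 0" using Z2 by simp
    moreover have e: "(\<Sum>c'\<in>C1. A p c' * \<alpha> c') = \<alpha> c" using unit_sum[of C1 c A p \<alpha>] assms(1) c1 p(2) by blast
    ultimately show ?thesis using h split[of p] p(1) by simp
  qed
qed

lemma ns_shift:
  assumes "ns A' W' C'" "(\<forall>p\<in>W'. \<forall>c\<in>C'. A (p+p0) (c+c0) = A' p c)"
    "W = (\<lambda>p. p+p0) ` W'" "C = (\<lambda>c. c+c0) ` C'"
  shows "ns A W C"
  unfolding ns_def
proof (intro allI impI ballI)
  fix \<alpha> c assume h: "\<forall>p\<in>W. (\<Sum>c\<in>C. A p c * \<alpha> c) = 0" and c: "c \<in> C"
  have "\<forall>p\<in>W'. (\<Sum>c\<in>C'. A' p c * \<alpha> (c + c0)) = 0"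
  proof
    fix p assume p: "p \<in> W'"
    have "(\<Sum>c\<in>C. A (p+p0) c * \<alpha> c) = (\<Sum>c\<in>C'. A (p+p0) (c+c0) * \<alpha> (c+c0))"
      unfolding assms(4) by (subst sum.reindex) (auto simp: inj_on_def)
    also have "\<dots> = (\<Sum>c\<in>C'. A' p c * \<alpha> (c + c0))" using assms(2) p by simp
    finally show "(\<Sum>c\<in>C'. A' p c * \<alpha> (c + c0)) = 0" using h p assms(3) by auto
  qed
  hence "\<forall>c\<in>C'. \<alpha> (c + c0) = 0" using assms(1)[unfolded ns_def, THEN spec[of _ "\<lambda>c. \<alpha> (c + c0)"]] by blast
  thus "\<alpha> c = 0" using c assms(4) by auto
qed



lemma air_top:
  assumes "0 < n" "p < m div n * n" "c < n"
  shows "air_ent m n p c = (p mod n = c)"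
proof -
  have "m div n * n \<le> m" by simp
  hence "p < m" using assms(2) by linarith
  thus ?thesis using assms by (subst air_ent.simps) auto
qed

lemma air_bot1:
  assumes "0 < n" "m div n * n \<le> p" "p < m" "c < n div (m mod n) * (m mod n)"
  shows "air_ent m n p c = (c mod (m mod n) = p - m div n * n)"
proof -
  have "m mod n \<noteq> 0" using assms(2,3) by (metis div_mult_mod_eq add.right_neutral not_le)
  have "n div (m mod n) * (m mod n) \<le> n" by simp
  hence "c < n" using assms(4) by linarith
  thus ?thesis using assms \<open>m mod n \<noteq> 0\<close> by (subst air_ent.simps) (auto simp: Let_def)
qed

lemma air_bot2:
  assumes "0 < n" "m div n * n \<le> p" "p < m" "n div (m mod n) * (m mod n) \<le> c" "c < n"
  shows "air_ent m n p c = air_ent (m mod n) (n mod (m mod n)) (p - m div n * n) (c - n div (m mod n) * (m mod n))"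
proof -
  have "m mod n \<noteq> 0" using assms(2,3) by (metis div_mult_mod_eq add.right_neutral not_le)
  thus ?thesis using assms by (subst air_ent.simps) (auto simp: Let_def)
qed

locale blk =
  fixes m n Q r q' r' :: nat
  assumes n0: "0 < n" and mQ: "m = Q*n + r" and rn: "r < n" and nq: "n = q'*r + r'" and rr: "r' < r" and nm: "n \<le> m"
begin

lemma r0: "0 < r" using rr by simp
lemma mdiv: "m div n = Q" using mQ rn by simp
lemma mmod: "m mod n = r" using mQ rn by simp
lemma ndiv: "n div r = q'" using nq rr by simp
lemma nmod: "n mod r = r'" using nq rr by simp
lemma Q1: "1 \<le> Q" and Qn: "n \<le> Q*n"
proof -
  show "1 \<le> Q"
  proof (rule ccontr)
    assume "\<not> 1 \<le> Q" hence "Q = 0" by simp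
    thus False using mQ rn nm by simp
  qed
  thus "n \<le> Q*n" by simp
qed
lemma q1: "1 \<le> q'" and qr: "r \<le> q'*r"
proof -
  show "1 \<le> q'"
  proof (rule ccontr)
    assume "\<not> 1 \<le> q'" hence "q' = 0" by simp
    thus False using nq rn rr by simp
  qed
  thus "r \<le> q'*r" by simp
qed

lemma Qn2: "n \<le> Q*n" using Q1 by simp
lemma qr2: "r \<le> q'*r" using q1 by simp

lemma e_top: "p < Q*n \<Longrightarrow> c < n \<Longrightarrow> AIR m n p c = (if p mod n = c then 1 else 0)"
  unfolding AIR_def using air_top[OF n0, of p m c] mdiv by simp

lemma e_b1: "b < r \<Longrightarrow> c < q'*r \<Longrightarrow> AIR m n (Q*n+b) c = (if c mod r = b then 1 else 0)"
  unfolding AIR_def using air_bot1[OF n0, of m "Q*n+b" c] mdiv mmod ndiv mQ by simp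

lemma e_b2: "b < r \<Longrightarrow> c' < r' \<Longrightarrow> AIR m n (Q*n+b) (q'*r + c') = AIR r r' b c'"
  unfolding AIR_def using air_bot2[OF n0, of m "Q*n+b" "q'*r+c'"] mdiv mmod ndiv nmod mQ nq by simp

end

lemma modinj:
  fixes r :: nat
  assumes "f \<le> c" "c < f + r" "f \<le> c'" "c' < f + r" "c mod r = c' mod r"
  shows "c = c'"
proof -
  have *: "x = y" if "f \<le> x" "x \<le> y" "y < f + r" "x mod r = y mod r" for x y
  proof -
    have "r dvd y - x" using that by (metis mod_eq_dvd_iff_nat)
    moreover have "y - x < r" using that by linarith
    ultimately have "y - x = 0" by (metis dvd_imp_le neq0_conv not_le)
    thus ?thesis using that by simp
  qed
  show ?thesis using *[of c c'] *[of c' c] assms by (cases "c \<le> c'") auto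
qed

lemma modk: "d < r \<Longrightarrow> (k*r + d) mod (r::nat) = d" by simp



definition air_prop :: "'a::field itself \<Rightarrow> nat \<Rightarrow> nat \<Rightarrow> bool" where
  "air_prop _ m n \<longleftrightarrow>
     (\<forall>w\<le>n. ns (AIR m n :: nat \<Rightarrow> nat \<Rightarrow> 'a) {m-w..<m} {n-w..<n}) \<and>
     (\<forall>j<m. ns (AIR m n :: nat \<Rightarrow> nat \<Rightarrow> 'a) ((\<lambda>\<tau>. (j+\<tau>) mod m) ` {..<n}) {..<n})"

lemma mod_shift_down:
  fixes c q r :: nat
  assumes "1 \<le> q" "q*r \<le> c + r" "c < q*r"
  shows "c mod r = c + r - q*r"
proof -
  have e: "(q-1)*r = q*r - r" by (simp add: diff_mult_distrib)
  have "q*r \<ge> r" using assms(1) by simp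
  hence "c = (q-1)*r + (c + r - q*r)" using e assms by linarith
  moreover have "c + r - q*r < r" using assms by linarith
  ultimately show ?thesis by (metis modk)
qed

lemma img_shift: "(\<lambda>\<tau>. k + \<tau>) ` {..<n} = {k..<k+(n::nat)}"
proof
  show "{k..<k + n} \<subseteq> (\<lambda>\<tau>. k + \<tau>) ` {..<n}"
  proof
    fix x assume "x \<in> {k..<k+n}"
    thus "x \<in> (\<lambda>\<tau>. k + \<tau>) ` {..<n}" by (intro image_eqI[of _ _ "x - k"]) auto
  qed
qed auto

context blk begin

lemma BII:
  assumes "w \<le> r"
  shows "ns (AIR m n :: nat \<Rightarrow> nat \<Rightarrow> 'a::field) {Q*n..<Q*n+w} {..<w}"
proof (rule ns_id)
  show "\<forall>c\<in>{..<w}. \<exists>p\<in>{Q*n..<Q*n+w}. \<forall>c'\<in>{..<w}. (AIR m n p c' :: 'a) = (if c' = c then 1 else 0)"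
  proof
    fix c assume c: "c \<in> {..<w}"
    show "\<exists>p\<in>{Q*n..<Q*n+w}. \<forall>c'\<in>{..<w}. (AIR m n p c' :: 'a) = (if c' = c then 1 else 0)"
    proof (rule bexI[of _ "Q*n+c"])
      show "\<forall>c'\<in>{..<w}. (AIR m n (Q*n+c) c' :: 'a) = (if c' = c then 1 else 0)"
      proof
        fix c' assume c': "c' \<in> {..<w}"
        have "c' < q'*r" "c < r" "c' < r" using c c' assms q1 by (auto intro: less_le_trans[OF _ mult_le_mono1[of 1 q' r]])
        thus "(AIR m n (Q*n+c) c' :: 'a) = (if c' = c then 1 else 0)" using e_b1[of c c'] by simp
      qed
    qed (use c in simp)
  qed
qed simp

lemma BI:
  assumes "f + r \<le> n"
  shows "ns (AIR m n :: nat \<Rightarrow> nat \<Rightarrow> 'a::field) {Q*n..<m} {f..<f+r}"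
proof (cases "f + r \<le> q'*r")
  case True
  show ?thesis
  proof (rule ns_id)
    show "\<forall>c\<in>{f..<f+r}. \<exists>p\<in>{Q*n..<m}. \<forall>c'\<in>{f..<f+r}. (AIR m n p c' :: 'a) = (if c' = c then 1 else 0)"
    proof
      fix c assume c: "c \<in> {f..<f+r}"
      show "\<exists>p\<in>{Q*n..<m}. \<forall>c'\<in>{f..<f+r}. (AIR m n p c' :: 'a) = (if c' = c then 1 else 0)"
      proof (rule bexI[of _ "Q*n + c mod r"])
        show "\<forall>c'\<in>{f..<f+r}. (AIR m n (Q*n + c mod r) c' :: 'a) = (if c' = c then 1 else 0)"
        proof
          fix c' assume c': "c' \<in> {f..<f+r}"
          have "c' < q'*r" "c mod r < r" using c' True r0 by auto
          hence "(AIR m n (Q*n + c mod r) c' :: 'a) = (if c' mod r = c mod r then 1 else 0)" using e_b1[of "c mod r" c'] by simp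
          moreover have "(c' mod r = c mod r) = (c' = c)" using modinj[of f c' r c] c c' by auto
          ultimately show "(AIR m n (Q*n + c mod r) c' :: 'a) = (if c' = c then 1 else 0)" by simp
        qed
      qed (use r0 mQ in simp)
    qed
  qed simp
next
  case False
  define w' where "w' = f + r - q'*r"
  have w'0: "0 < w'" and w'r: "w' \<le> r'" and fq: "f < q'*r" and fw: "f + r = q'*r + w'"
    using False assms nq rr unfolding w'_def by linarith+
  have r'0: "0 < r'" using w'0 w'r by simp
  have CC: "{f..<f+r} = {f..<q'*r} \<union> {q'*r..<f+r}" using fq False by (simp add: ivl_disj_un_two(3))
  show ?thesis unfolding CC
  proof (rule ns_elimB[of "{f..<q'*r}" "{q'*r..<f+r}" "{Q*n..<Q*n+w'}"])
    show "{Q*n..<Q*n+w'} \<subseteq> {Q*n..<m}" using mQ w'r rr by simp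
    show "\<forall>p\<in>{Q*n..<Q*n+w'}. \<forall>c\<in>{f..<q'*r}. (AIR m n p c :: 'a) = 0"
    proof (intro ballI)
      fix p c assume p: "p \<in> {Q*n..<Q*n+w'}" and c: "c \<in> {f..<q'*r}"
      have cm: "c mod r = c + r - q'*r" using mod_shift_down[OF q1, of r c] c fw by simp
      have b: "p = Q*n + (p - Q*n)" "p - Q*n < r" using p w'r rr by auto
      have "(AIR m n (Q*n + (p - Q*n)) c :: 'a) = (if c mod r = p - Q*n then 1 else 0)"
        using e_b1[of "p - Q*n" c] b c by simp
      moreover have "c mod r \<noteq> p - Q*n" using cm p c fw by auto
      ultimately show "(AIR m n p c :: 'a) = 0" using b by metis
    qed
    show "ns (AIR m n :: nat \<Rightarrow> nat \<Rightarrow> 'a) {Q*n..<Q*n+w'} {q'*r..<f+r}"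
    proof (rule ns_id)
      show "\<forall>c\<in>{q'*r..<f+r}. \<exists>p\<in>{Q*n..<Q*n+w'}. \<forall>c'\<in>{q'*r..<f+r}. (AIR m n p c' :: 'a) = (if c' = c then 1 else 0)"
      proof
        fix c assume c: "c \<in> {q'*r..<f+r}"
        show "\<exists>p\<in>{Q*n..<Q*n+w'}. \<forall>c'\<in>{q'*r..<f+r}. (AIR m n p c' :: 'a) = (if c' = c then 1 else 0)"
        proof (rule bexI[of _ "Q*n + (c - q'*r)"])
          show "\<forall>c'\<in>{q'*r..<f+r}. (AIR m n (Q*n + (c - q'*r)) c' :: 'a) = (if c' = c then 1 else 0)"
          proof
            fix c' assume c': "c' \<in> {q'*r..<f+r}"
            have l1: "c - q'*r < w'" "c' - q'*r < w'" using c c' fw by auto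
            have l2: "c - q'*r < r" using l1 w'r rr by linarith
            have l3: "c' - q'*r < r'" using l1 w'r by linarith
            have "(AIR m n (Q*n + (c - q'*r)) c' :: 'a) = AIR m n (Q*n + (c - q'*r)) (q'*r + (c' - q'*r))"
              using c' by simp
            also have "AIR m n (Q*n + (c - q'*r)) (q'*r + (c' - q'*r)) = (AIR r r' (c - q'*r) (c' - q'*r) :: 'a)" using e_b2[OF l2 l3] .
            also have "\<dots> = (if (c - q'*r) mod r' = c' - q'*r then 1 else 0)"
            proof -
              have "0 < r div r'" by (subst div_greater_zero_iff) (use r'0 rr in auto)
              hence "1 \<le> r div r'" by simp
              hence "r' \<le> r div r' * r'" using mult_le_mono1[of 1 "r div r'" r'] by simp
              hence "c - q'*r < r div r' * r'" using l1 w'r by linarith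
              thus ?thesis unfolding AIR_def using air_top[OF r'0, of "c - q'*r" r "c' - q'*r"] l1 w'r by simp
            qed
            also have "\<dots> = (if c' = c then 1 else 0)" using l1 w'r c c' by auto
            finally show "(AIR m n (Q*n + (c - q'*r)) c' :: 'a) = (if c' = c then 1 else 0)" .
          qed
        qed (use c fw in auto)
      qed
    qed simp
    show "\<forall>c\<in>{f..<q'*r}. \<exists>p\<in>{Q*n..<m}. \<forall>c'\<in>{f..<q'*r}. (AIR m n p c' :: 'a) = (if c' = c then 1 else 0)"
    proof
      fix c assume c: "c \<in> {f..<q'*r}"
      show "\<exists>p\<in>{Q*n..<m}. \<forall>c'\<in>{f..<q'*r}. (AIR m n p c' :: 'a) = (if c' = c then 1 else 0)"
      proof (rule bexI[of _ "Q*n + c mod r"])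
        show "\<forall>c'\<in>{f..<q'*r}. (AIR m n (Q*n + c mod r) c' :: 'a) = (if c' = c then 1 else 0)"
        proof
          fix c' assume c': "c' \<in> {f..<q'*r}"
          have "c' < q'*r" "c mod r < r" using c' r0 by auto
          hence "(AIR m n (Q*n + c mod r) c' :: 'a) = (if c' mod r = c mod r then 1 else 0)" using e_b1[of "c mod r" c'] by simp
          moreover have "(c' mod r = c mod r) = (c' = c)" using modinj[of f c' r c] c c' fq fw by auto
          ultimately show "(AIR m n (Q*n + c mod r) c' :: 'a) = (if c' = c then 1 else 0)" by simp
        qed
      qed (use r0 mQ in simp)
    qed
  qed auto
qed

end


context blk begin

lemma BIII:
  assumes wr: "w \<le> r" and IH: "0 < r' \<Longrightarrow> air_prop TYPE('a::field) r r'"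
  shows "ns (AIR m n :: nat \<Rightarrow> nat \<Rightarrow> 'a) {m-w..<m} {n-w..<n}"
proof (cases "w \<le> r'")
  case True
  show ?thesis
  proof (cases "w = 0")
    case True thus ?thesis by (simp add: ns_empty)
  next
    case False
    hence r'0: "0 < r'" using \<open>w \<le> r'\<close> by simp
    have T: "ns (AIR r r' :: nat \<Rightarrow> nat \<Rightarrow> 'a) {r-w..<r} {r'-w..<r'}"
      using IH[OF r'0] True unfolding air_prop_def by blast
    show ?thesis
    proof (rule ns_shift[OF T, of _ "Q*n" "q'*r"])
      show "\<forall>p\<in>{r - w..<r}. \<forall>c\<in>{r' - w..<r'}. (AIR m n (p + Q*n) (c + q'*r) :: 'a) = AIR r r' p c"
      proof (intro ballI)
        fix p c assume p: "p \<in> {r - w..<r}" and c: "c \<in> {r' - w..<r'}"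
        have "p < r" "c < r'" using p c by auto
        from e_b2[OF this] show "(AIR m n (p + Q*n) (c + q'*r) :: 'a) = AIR r r' p c"
          by (simp add: add.commute)
      qed
      show "{m - w..<m} = (\<lambda>p. p + Q*n) ` {r - w..<r}" using mQ wr by (simp add: add.commute)
      show "{n - w..<n} = (\<lambda>c. c + q'*r) ` {r' - w..<r'}" using nq True by (simp add: add.commute)
    qed
  qed
next
  case False
  hence wr': "r' < w" by simp
  have qr1: "r \<le> q'*r" using q1 by simp
  have CC: "{n-w..<n} = {n-w..<q'*r} \<union> {q'*r..<n}" using wr' nq by (simp add: ivl_disj_un_two(3))
  show ?thesis unfolding CC
  proof (rule ns_elimB[of "{n-w..<q'*r}" "{q'*r..<n}" "{m-w..<m-w+r'}"])
    show "{m-w..<m-w+r'} \<subseteq> {m-w..<m}" using wr' wr mQ by auto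
    show "\<forall>p\<in>{m-w..<m-w+r'}. \<forall>c\<in>{n-w..<q'*r}. (AIR m n p c :: 'a) = 0"
    proof (intro ballI)
      fix p c assume p: "p \<in> {m-w..<m-w+r'}" and c: "c \<in> {n-w..<q'*r}"
      have hh: "q'*r \<le> c + r" using c nq wr qr1 by auto
      have cm: "c mod r = c + r - q'*r" using mod_shift_down[OF q1 hh] c by simp
      have b: "p = Q*n + (p - Q*n)" "p - Q*n < r" using p wr wr' mQ by auto
      have "(AIR m n (Q*n + (p - Q*n)) c :: 'a) = (if c mod r = p - Q*n then 1 else 0)"
        using e_b1[of "p - Q*n" c] b c by simp
      moreover have "c mod r \<noteq> p - Q*n" using cm p c nq mQ wr wr' by auto
      ultimately show "(AIR m n p c :: 'a) = 0" using b by metis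
    qed
    show "ns (AIR m n :: nat \<Rightarrow> nat \<Rightarrow> 'a) {m-w..<m-w+r'} {q'*r..<n}"
    proof (cases "r' = 0")
      case True thus ?thesis using nq by (simp add: ns_empty)
    next
      case False
      hence r'0: "0 < r'" by simp
      have j: "r - w < r" using wr' wr by linarith
      have Wn: "ns (AIR r r' :: nat \<Rightarrow> nat \<Rightarrow> 'a) ((\<lambda>\<tau>. (r - w + \<tau>) mod r) ` {..<r'}) {..<r'}"
        using IH[OF r'0] j unfolding air_prop_def by blast
      have "(\<lambda>\<tau>. (r - w + \<tau>) mod r) ` {..<r'} = (\<lambda>\<tau>. r - w + \<tau>) ` {..<r'}"
        using wr wr' by (intro image_cong) auto
      also have "\<dots> = {r-w..<r-w+r'}" by (rule img_shift)
      finally have Wn': "ns (AIR r r' :: nat \<Rightarrow> nat \<Rightarrow> 'a) {r-w..<r-w+r'} {..<r'}" using Wn by simp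
      show ?thesis
      proof (rule ns_shift[OF Wn', of _ "Q*n" "q'*r"])
        show "\<forall>p\<in>{r-w..<r-w+r'}. \<forall>c\<in>{..<r'}. (AIR m n (p + Q*n) (c + q'*r) :: 'a) = AIR r r' p c"
        proof (intro ballI)
          fix p c assume p: "p \<in> {r-w..<r-w+r'}" and c: "c \<in> {..<r'}"
          have "p < r" "c < r'" using p c wr wr' by auto
          from e_b2[OF this] show "(AIR m n (p + Q*n) (c + q'*r) :: 'a) = AIR r r' p c"
            by (simp add: add.commute)
        qed
        have e1: "m - w = r - w + Q*n" "m-w+r' = r-w+r'+Q*n" using mQ wr by auto
        show "{m-w..<m-w+r'} = (\<lambda>p. p + Q*n) ` {r-w..<r-w+r'}" unfolding e1 by (simp add: ac_simps)
        show "{q'*r..<n} = (\<lambda>c. c + q'*r) ` {..<r'}" using nq by (simp add: lessThan_atLeast0 add.commute)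
      qed
    qed
    show "\<forall>c\<in>{n-w..<q'*r}. \<exists>p\<in>{m-w..<m}. \<forall>c'\<in>{n-w..<q'*r}. (AIR m n p c' :: 'a) = (if c' = c then 1 else 0)"
    proof
      fix c assume c: "c \<in> {n-w..<q'*r}"
      have hh: "q'*r \<le> c + r" using c nq wr qr1 by auto
      have cm: "c mod r = c + r - q'*r" using mod_shift_down[OF q1 hh] c by simp
      show "\<exists>p\<in>{m-w..<m}. \<forall>c'\<in>{n-w..<q'*r}. (AIR m n p c' :: 'a) = (if c' = c then 1 else 0)"
      proof (rule bexI[of _ "Q*n + c mod r"])
        show "\<forall>c'\<in>{n-w..<q'*r}. (AIR m n (Q*n + c mod r) c' :: 'a) = (if c' = c then 1 else 0)"
        proof
          fix c' assume c': "c' \<in> {n-w..<q'*r}"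
          have "c' < q'*r" "c mod r < r" using c' r0 by auto
          hence "(AIR m n (Q*n + c mod r) c' :: 'a) = (if c' mod r = c mod r then 1 else 0)" using e_b1[of "c mod r" c'] by simp
          moreover have "(c' mod r = c mod r) = (c' = c)" using modinj[of "n-w" c' r c] c c' nq wr by auto
          ultimately show "(AIR m n (Q*n + c mod r) c' :: 'a) = (if c' = c then 1 else 0)" by simp
        qed
      qed (use r0 mQ cm c nq wr in auto)
    qed
  qed auto
qed

end


lemma res_hit:
  fixes n c j :: nat
  assumes "0 < n" "c < n"
  shows "(j + (c + n - j mod n) mod n) mod n = c"
proof -
  have "(j + (c + n - j mod n) mod n) mod n = (j + (c + n - j mod n)) mod n" by (simp add: mod_add_right_eq)
  also have "\<dots> = (j mod n + (c + n - j mod n)) mod n" by (simp add: mod_add_left_eq)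
  also have "j mod n + (c + n - j mod n) = c + n" using mod_less_divisor[OF assms(1), of j] by linarith
  finally show ?thesis using assms by simp
qed

lemma wmem1: "j \<le> p \<Longrightarrow> p < j + n \<Longrightarrow> p < m \<Longrightarrow> p \<in> (\<lambda>\<tau>. (j+\<tau>) mod m) ` {..<(n::nat)}"
  by (rule image_eqI[of _ _ "p - j"]) auto

lemma wmem2: "j < m \<Longrightarrow> p < m \<Longrightarrow> p + m < j + n \<Longrightarrow> p \<in> (\<lambda>\<tau>. (j+\<tau>) mod m) ` {..<(n::nat)}"
  by (rule image_eqI[of _ _ "p + m - j"]) auto

lemma top_row: "0 < n \<Longrightarrow> c < (n::nat) \<Longrightarrow> 1 \<le> Q \<Longrightarrow> (Q*n - n + c) mod n = c \<and> Q*n - n + c < Q*n"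
proof -
  assume a: "0 < n" "c < n" "1 \<le> Q"
  have e: "Q*n - n = (Q-1)*n" by (simp add: diff_mult_distrib)
  have "n \<le> Q*n" using a by simp
  thus ?thesis using a e by (metis modk le_add_diff_inverse2 add_less_cancel_left)
qed

lemma zero_case:
  assumes n0: "0 < n" and mQ: "m = Q*n" and Q1: "1 \<le> Q"
  shows "air_prop TYPE('a::field) m n"
proof -
  have mdiv: "m div n = Q" using mQ n0 by simp
  have unit: "(AIR m n p c' :: 'a) = (if c' = c then 1 else 0)" if "p < m" "p mod n = c" "c' < n" for p c c'
    unfolding AIR_def using air_top[OF n0, of p m c'] that mdiv mQ by auto
  have T: "ns (AIR m n :: nat \<Rightarrow> nat \<Rightarrow> 'a) {m-w..<m} {n-w..<n}" if "w \<le> n" for w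
  proof (rule ns_id)
    show "\<forall>c\<in>{n-w..<n}. \<exists>p\<in>{m-w..<m}. \<forall>c'\<in>{n-w..<n}. (AIR m n p c' :: 'a) = (if c' = c then 1 else 0)"
    proof
      fix c assume c: "c \<in> {n-w..<n}"
      have tr: "(Q*n - n + c) mod n = c" "Q*n - n + c < Q*n" using top_row[OF n0 _ Q1, of c] c by auto
      show "\<exists>p\<in>{m-w..<m}. \<forall>c'\<in>{n-w..<n}. (AIR m n p c' :: 'a) = (if c' = c then 1 else 0)"
        by (rule bexI[of _ "Q*n - n + c"]) (use tr c mQ unit in auto)
    qed
  qed simp
  have W: "ns (AIR m n :: nat \<Rightarrow> nat \<Rightarrow> 'a) ((\<lambda>\<tau>. (j+\<tau>) mod m) ` {..<n}) {..<n}" if "j < m" for j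
  proof (rule ns_id)
    show "\<forall>c\<in>{..<n}. \<exists>p\<in>(\<lambda>\<tau>. (j+\<tau>) mod m) ` {..<n}. \<forall>c'\<in>{..<n}. (AIR m n p c' :: 'a) = (if c' = c then 1 else 0)"
    proof
      fix c assume c: "c \<in> {..<n}"
      define \<tau> where "\<tau> = (c + n - j mod n) mod n"
      have \<tau>n: "\<tau> < n" unfolding \<tau>_def using n0 by simp
      have h: "(j + \<tau>) mod n = c" unfolding \<tau>_def using res_hit[OF n0, of c j] c by simp
      have "n dvd m" using mQ by simp
      hence h2: "(j + \<tau>) mod m mod n = c" using h by (simp add: mod_mod_cancel)
      have pm: "(j + \<tau>) mod m < m" using that by simp
      show "\<exists>p\<in>(\<lambda>\<tau>. (j+\<tau>) mod m) ` {..<n}. \<forall>c'\<in>{..<n}. (AIR m n p c' :: 'a) = (if c' = c then 1 else 0)"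
        by (rule bexI[of _ "(j + \<tau>) mod m"]) (use \<tau>n h2 pm unit in auto)
    qed
  qed simp
  show ?thesis unfolding air_prop_def using T W by blast
qed



context blk begin

lemma unitT:
  assumes "p < Q*n" "p mod n = c" "C \<subseteq> {..<n}"
  shows "\<forall>c'\<in>C. (AIR m n p c' :: 'a::field) = (if c' = c then 1 else 0)"
proof
  fix c' assume "c' \<in> C"
  hence "c' < n" using assms(3) by auto
  thus "(AIR m n p c' :: 'a::field) = (if c' = c then 1 else 0)" using e_top[OF assms(1), of c'] assms(2) by auto
qed

lemma main_blk:
  assumes IH: "0 < r' \<Longrightarrow> air_prop TYPE('a::field) r r'"
  shows "air_prop TYPE('a) m n"
proof -
  have T: "ns (AIR m n :: nat \<Rightarrow> nat \<Rightarrow> 'a) {m-w..<m} {n-w..<n}" if wn: "w \<le> n" for w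
  proof (cases "w \<le> r")
    case True thus ?thesis using BIII IH by blast
  next
    case False
    have CR: "{n-w..<n} - {n-w+r..<n} = {n-w..<n-w+r}" using False wn by auto
    show ?thesis
    proof (rule ns_elimA[of "{n-w..<n}" "{n-w+r..<n}" _ _ "{Q*n..<m}"])
      show "ns (AIR m n :: nat \<Rightarrow> nat \<Rightarrow> 'a) {Q*n..<m} ({n-w..<n} - {n-w+r..<n})"
      proof -
        have "n - w + r \<le> n" using False wn by linarith
        thus ?thesis unfolding CR by (rule BI)
      qed
      show "\<forall>c\<in>{n-w+r..<n}. \<exists>p\<in>{m-w..<m}. \<forall>c'\<in>{n-w..<n}. (AIR m n p c' :: 'a) = (if c' = c then 1 else 0)"
      proof
        fix c assume c: "c \<in> {n-w+r..<n}"
        have tr: "(Q*n - n + c) mod n = c" "Q*n - n + c < Q*n" using top_row[OF n0 _ Q1, of c] c by auto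
        show "\<exists>p\<in>{m-w..<m}. \<forall>c'\<in>{n-w..<n}. (AIR m n p c' :: 'a) = (if c' = c then 1 else 0)"
        proof (rule bexI[of _ "Q*n - n + c"])
          show "\<forall>c'\<in>{n-w..<n}. (AIR m n (Q*n - n + c) c' :: 'a) = (if c' = c then 1 else 0)"
            by (rule unitT[OF tr(2) tr(1)]) auto
          show "Q*n - n + c \<in> {m-w..<m}" using c mQ Qn2 tr(2) wn by auto
        qed
      qed
      show "{Q*n..<m} \<subseteq> {m-w..<m}" using wn False mQ by auto
    qed auto
  qed
  have W: "ns (AIR m n :: nat \<Rightarrow> nat \<Rightarrow> 'a) ((\<lambda>\<tau>. (j+\<tau>) mod m) ` {..<n}) {..<n}" if jm: "j < m" for j
  proof -
    let ?W = "(\<lambda>\<tau>. (j+\<tau>) mod m) ` {..<n}"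
    have topu: "\<exists>p\<in>?W. \<forall>c'\<in>{..<n}. (AIR m n p c' :: 'a) = (if c' = c then 1 else 0)"
      if "p \<in> ?W" "p < Q*n" "p mod n = c" for p c
    proof (rule bexI[OF _ that(1)])
      show "\<forall>c'\<in>{..<n}. (AIR m n p c' :: 'a) = (if c' = c then 1 else 0)"
        by (rule unitT[OF that(2,3)]) auto
    qed
    show ?thesis
    proof (cases "j + n \<le> Q*n")
      case True
      show ?thesis
      proof (rule ns_id)
        show "\<forall>c\<in>{..<n}. \<exists>p\<in>?W. \<forall>c'\<in>{..<n}. (AIR m n p c' :: 'a) = (if c' = c then 1 else 0)"
        proof
          fix c assume c: "c \<in> {..<n}"
          define \<tau> where "\<tau> = (c + n - j mod n) mod n"
          have \<tau>n: "\<tau> < n" unfolding \<tau>_def using n0 by simp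
          have h: "(j + \<tau>) mod n = c" unfolding \<tau>_def using res_hit[OF n0, of c j] c by simp
          have "j + \<tau> \<in> ?W" using \<tau>n True mQ by (intro wmem1) auto
          thus "\<exists>p\<in>?W. \<forall>c'\<in>{..<n}. (AIR m n p c' :: 'a) = (if c' = c then 1 else 0)"
            using topu[of "j + \<tau>" c] h \<tau>n True by auto
        qed
      qed simp
    next
      case notA: False
      show ?thesis
      proof (cases "j < Q*n")
        case jQ: True
        show ?thesis
        proof (cases "j + n \<le> m")
          case True
          define w where "w = j + n - Q*n"
          have wr: "w \<le> r" using True mQ unfolding w_def by simp
          have CR: "{..<n} - {w..<n} = {..<w}" using wr rn by auto
          show ?thesis
          proof (rule ns_elimA[of "{..<n}" "{w..<n}" _ _ "{Q*n..<Q*n+w}"])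
            show "ns (AIR m n :: nat \<Rightarrow> nat \<Rightarrow> 'a) {Q*n..<Q*n+w} ({..<n} - {w..<n})"
              unfolding CR using BII[OF wr] by simp
            show "\<forall>c\<in>{w..<n}. \<exists>p\<in>?W. \<forall>c'\<in>{..<n}. (AIR m n p c' :: 'a) = (if c' = c then 1 else 0)"
            proof
              fix c assume c: "c \<in> {w..<n}"
              have tr: "(Q*n - n + c) mod n = c" "Q*n - n + c < Q*n" using top_row[OF n0 _ Q1, of c] c by auto
              have "Q*n - n + c \<in> ?W" using c tr Qn2 mQ notA unfolding w_def by (intro wmem1) auto
              thus "\<exists>p\<in>?W. \<forall>c'\<in>{..<n}. (AIR m n p c' :: 'a) = (if c' = c then 1 else 0)"
                using topu tr by blast
            qed
            show "{Q*n..<Q*n+w} \<subseteq> ?W"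
            proof
              fix p assume "p \<in> {Q*n..<Q*n+w}"
              thus "p \<in> ?W" using jQ True unfolding w_def by (intro wmem1) auto
            qed
          qed auto
        next
          case False
          define f where "f = j + n - m"
          have fr: "f + r \<le> n" using jQ mQ False unfolding f_def by linarith
          have fr2: "f + r = j + n - Q*n" using False mQ unfolding f_def by simp
          let ?R = "{..<f} \<union> {f+r..<n}"
          have CR: "{..<n} - ?R = {f..<f+r}" using fr by auto
          show ?thesis
          proof (rule ns_elimA[of "{..<n}" ?R _ _ "{Q*n..<m}"])
            show "ns (AIR m n :: nat \<Rightarrow> nat \<Rightarrow> 'a) {Q*n..<m} ({..<n} - ?R)"
              unfolding CR using BI[OF fr] by simp
            show "\<forall>c\<in>?R. \<exists>p\<in>?W. \<forall>c'\<in>{..<n}. (AIR m n p c' :: 'a) = (if c' = c then 1 else 0)"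
            proof
              fix c assume c: "c \<in> ?R"
              show "\<exists>p\<in>?W. \<forall>c'\<in>{..<n}. (AIR m n p c' :: 'a) = (if c' = c then 1 else 0)"
              proof (cases "c < f")
                case True
                have cn: "c < n" "c < Q*n" using True fr Qn2 by linarith+
                have "c \<in> ?W" using True jm cn False mQ unfolding f_def by (intro wmem2) auto
                thus ?thesis using topu[of c c] cn by simp
              next
                case False
                hence c2: "f + r \<le> c" "c < n" using c by auto
                have tr: "(Q*n - n + c) mod n = c" "Q*n - n + c < Q*n" using top_row[OF n0 _ Q1, of c] c2 by auto
                have "Q*n - n + c \<in> ?W" by (intro wmem1; use c2 tr Qn2 mQ fr2 notA jQ in linarith)
                thus ?thesis using topu tr by blast
              qed
            qed
            show "{Q*n..<m} \<subseteq> ?W"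
            proof
              fix p assume "p \<in> {Q*n..<m}"
              thus "p \<in> ?W" using jQ False by (intro wmem1) auto
            qed
          qed (use fr in auto)
        qed
      next
        case jQ: False
        define w where "w = m - j"
        have wr: "w \<le> r" "0 < w" "w \<le> n" using jQ jm mQ rn unfolding w_def by auto
        have CR: "{..<n} - {..<n-w} = {n-w..<n}" by auto
        show ?thesis
        proof (rule ns_elimA[of "{..<n}" "{..<n-w}" _ _ "{m-w..<m}"])
          show "ns (AIR m n :: nat \<Rightarrow> nat \<Rightarrow> 'a) {m-w..<m} ({..<n} - {..<n-w})"
            unfolding CR using BIII[OF wr(1) IH] by simp
          show "\<forall>c\<in>{..<n-w}. \<exists>p\<in>?W. \<forall>c'\<in>{..<n}. (AIR m n p c' :: 'a) = (if c' = c then 1 else 0)"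
          proof
            fix c assume c: "c \<in> {..<n-w}"
            have c0: "c < n - w" using c by simp
            have cn: "c < n" "c < Q*n" using c0 Qn2 by linarith+
            have "c \<in> ?W" using c jm cn wr mQ unfolding w_def by (intro wmem2) auto
            thus "\<exists>p\<in>?W. \<forall>c'\<in>{..<n}. (AIR m n p c' :: 'a) = (if c' = c then 1 else 0)"
              using topu[of c c] cn by simp
          qed
          show "{m-w..<m} \<subseteq> ?W"
          proof
            fix p assume "p \<in> {m-w..<m}"
            thus "p \<in> ?W" using jm wr unfolding w_def by (intro wmem1) auto
          qed
        qed auto
      qed
    qed
  qed
  show ?thesis unfolding air_prop_def using T W by blast
qed

end

lemma air_main: "0 < n \<Longrightarrow> n \<le> m \<Longrightarrow> air_prop TYPE('a::field) m n"
proof (induction m arbitrary: n rule: less_induct)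
  case (less m n)
  define Q r where "Q = m div n" and "r = m mod n"
  have mQ: "m = Q*n + r" unfolding Q_def r_def by simp
  have rn: "r < n" unfolding r_def using less.prems by simp
  show ?case
  proof (cases "r = 0")
    case True
    have Q1: "1 \<le> Q"
    proof (rule ccontr)
      assume "\<not> 1 \<le> Q" hence "Q = 0" by simp
      thus False using mQ True less.prems by simp
    qed
    show ?thesis using zero_case[OF less.prems(1) _ Q1] mQ True by simp
  next
    case False
    define q' r' where "q' = n div r" and "r' = n mod r"
    interpret blk m n Q r q' r'
      by unfold_locales (use less.prems mQ rn False in \<open>auto simp: q'_def r'_def\<close>)
    have IH: "0 < r' \<Longrightarrow> air_prop TYPE('a) r r'"
      using less.IH[of r r'] rn less.prems rr by simp
    show ?thesis using main_blk[OF IH] by simp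
  qed
qed



lemma ns_surj:
  fixes A :: "nat \<Rightarrow> nat \<Rightarrow> 'a::{field,finite}"
  assumes ns: "ns A W C" and fC: "finite C" and fW: "finite W" and cd: "card W = card C"
  shows "\<exists>\<alpha>. \<forall>p\<in>W. (\<Sum>c\<in>C. A p c * \<alpha> c) = z p"
proof -
  define \<Phi> where "\<Phi> \<alpha> = restrict (\<lambda>p. \<Sum>c\<in>C. A p c * \<alpha> c) W" for \<alpha>
  let ?S = "PiE C (\<lambda>_. (UNIV :: 'a set))"
  let ?T = "PiE W (\<lambda>_. (UNIV :: 'a set))"
  have inj: "inj_on \<Phi> ?S"
  proof (rule inj_onI)
    fix \<alpha> \<beta> assume a: "\<alpha> \<in> ?S" and b: "\<beta> \<in> ?S" and e: "\<Phi> \<alpha> = \<Phi> \<beta>"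
    have "\<forall>p\<in>W. (\<Sum>c\<in>C. A p c * (\<alpha> c - \<beta> c)) = 0"
    proof
      fix p assume p: "p \<in> W"
      have "(\<Sum>c\<in>C. A p c * \<alpha> c) = (\<Sum>c\<in>C. A p c * \<beta> c)"
        using fun_cong[OF e, of p] p unfolding \<Phi>_def by simp
      thus "(\<Sum>c\<in>C. A p c * (\<alpha> c - \<beta> c)) = 0"
        by (simp add: right_diff_distrib sum_subtractf)
    qed
    hence "\<forall>c\<in>C. \<alpha> c - \<beta> c = 0" using ns[unfolded ns_def, THEN spec[of _ "\<lambda>c. \<alpha> c - \<beta> c"]] by blast
    thus "\<alpha> = \<beta>" using a b by (intro PiE_ext) auto
  qed
  have sub: "\<Phi> ` ?S \<subseteq> ?T" unfolding \<Phi>_def by auto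
  have "card (\<Phi> ` ?S) = card ?S" using card_image[OF inj] .
  also have "\<dots> = card ?T" using fC fW cd by (simp add: card_PiE)
  finally have eq: "\<Phi> ` ?S = ?T"
    using card_subset_eq[OF _ sub] fW by (simp add: finite_PiE)
  have "restrict z W \<in> ?T" by simp
  then obtain \<alpha> where "\<alpha> \<in> ?S" "\<Phi> \<alpha> = restrict z W" using eq by (metis imageE)
  hence "\<forall>p\<in>W. (\<Sum>c\<in>C. A p c * \<alpha> c) = z p" unfolding \<Phi>_def by (metis restrict_apply')
  thus ?thesis by blast
qed

lemma win_card: "n \<le> m \<Longrightarrow> card ((\<lambda>\<tau>. (j+\<tau>) mod m) ` {..<n}) = n"
proof -
  assume nm: "n \<le> m"
  have "inj_on (\<lambda>\<tau>. (j+\<tau>) mod m) {..<n}"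
  proof (rule inj_onI)
    fix x y assume "x \<in> {..<n}" "y \<in> {..<n}" "(j + x) mod m = (j + y) mod m"
    hence "j + x = j + y" using modinj[of j "j+x" m "j+y"] nm by auto
    thus "x = y" by simp
  qed
  thus ?thesis by (simp add: card_image)
qed

lemma air_decode:
  fixes m n j \<tau>0 :: nat
  assumes "0 < n" "n \<le> m" "j < m" "\<tau>0 < n"
  shows "\<exists>\<alpha>. \<forall>\<tau><n. (\<Sum>t<n. (AIR m n ((j+\<tau>) mod m) t :: 'a::{field,finite}) * \<alpha> t) = (if \<tau> = \<tau>0 then 1 else 0)"
proof -
  let ?W = "(\<lambda>\<tau>. (j+\<tau>) mod m) ` {..<n}"
  have ns: "ns (AIR m n :: nat \<Rightarrow> nat \<Rightarrow> 'a) ?W {..<n}"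
    using air_main[OF assms(1,2), where 'a='a] assms(3) unfolding air_prop_def by blast
  obtain \<alpha> where \<alpha>: "\<forall>p\<in>?W. (\<Sum>c\<in>{..<n}. (AIR m n p c :: 'a) * \<alpha> c) = (if p = (j+\<tau>0) mod m then 1 else 0)"
    using ns_surj[OF ns, of "\<lambda>p. if p = (j+\<tau>0) mod m then 1 else 0"] win_card[OF assms(2)] by auto
  have "\<forall>\<tau><n. (\<Sum>t<n. (AIR m n ((j+\<tau>) mod m) t :: 'a) * \<alpha> t) = (if \<tau> = \<tau>0 then 1 else 0)"
  proof (intro allI impI)
    fix \<tau> assume \<tau>: "\<tau> < n"
    have "((j+\<tau>) mod m = (j+\<tau>0) mod m) = (\<tau> = \<tau>0)"
      using modinj[of j "j+\<tau>" m "j+\<tau>0"] \<tau> assms by auto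
    thus "(\<Sum>t<n. (AIR m n ((j+\<tau>) mod m) t :: 'a) * \<alpha> t) = (if \<tau> = \<tau>0 then 1 else 0)"
      using \<alpha> \<tau> by auto
  qed
  thus ?thesis by blast
qed



lemma idx_cong:
  assumes "0 < m"
  shows "(int a * (int (N mod m) + 1 - int i') + int j') mod int (a*m)
       = (int a * (int N + 1 - int i') + int j') mod int (a*m)"
proof -
  have "int N = int (N div m * m + N mod m)" by (simp only: div_mult_mod_eq)
  also have "\<dots> = int m * int (N div m) + int (N mod m)" by (simp only: of_nat_add of_nat_mult mult.commute)
  finally have h: "int (N mod m) = int N - int m * int (N div m)" by simp
  have eq: "int a * (int (N mod m) + 1 - int i') + int j'
      = (int a * (int N + 1 - int i') + int j') + int (a*m) * (- int (N div m))"
    unfolding h by (simp add: algebra_simps)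
  show ?thesis unfolding eq by (rule mod_mult_self2)
qed

lemma si_pos:
  assumes "1 \<le> d" "d \<le> int D"
  shows "nat ((int k + d) mod int K) \<in> side_info K D U k"
proof -
  define t where "t = nat d"
  have td: "int t = d" "1 \<le> t" "t \<le> D" using assms unfolding t_def by auto
  have "int ((k + t) mod K) = (int k + d) mod int K" using td by (simp add: of_nat_mod)
  hence "nat ((int k + d) mod int K) = (k + t) mod K" by simp
  thus ?thesis unfolding side_info_def using td by blast
qed

lemma si_neg:
  assumes "d \<le> -1" "- d \<le> int U"
  shows "nat ((int k + d) mod int K) \<in> side_info K D U k"
proof -
  define t where "t = nat (- d)"
  have td: "int k - int t = int k + d" "1 \<le> t" "t \<le> U" using assms unfolding t_def by auto
  show ?thesis unfolding side_info_def using td by (metis (mono_tags, lifting) UnI1 mem_Collect_eq)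
qed

lemma si_fin: "0 < K \<Longrightarrow> finite (side_info K D U k)"
proof -
  assume K: "0 < K"
  have "side_info K D U k \<subseteq> {..<K}"
  proof
    fix x assume "x \<in> side_info K D U k"
    then consider t where "x = nat ((int k - int t) mod int K)" | t where "x = (k + t) mod K"
      unfolding side_info_def by blast
    thus "x \<in> {..<K}"
    proof cases
      case 1
      have "(int k - int t) mod int K < int K" using K by simp
      moreover have "0 \<le> (int k - int t) mod int K" using K by simp
      ultimately show ?thesis using 1 by auto
    next
      case 2 thus ?thesis using K by simp
    qed
  qed
  thus ?thesis by (rule finite_subset) simp
qed

lemma regroup_one:
  fixes x :: "nat \<Rightarrow> nat \<Rightarrow> 'a::field"
  assumes "finite S" "finite L" "w \<noteq> 0 \<longrightarrow> g \<in> S \<and> h \<in> L"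
  shows "w * x g h = (\<Sum>j\<in>S. \<Sum>l\<in>L. (if g = j \<and> h = l then w else 0) * x j l)"
proof (cases "w = 0")
  case True
  have "\<And>j l. (if g = j \<and> h = l then w else 0) = 0" using True by simp
  thus ?thesis using True by simp
next
  case False
  hence gh: "g \<in> S" "h \<in> L" using assms(3) by auto
  have "(\<Sum>j\<in>S. \<Sum>l\<in>L. (if g = j \<and> h = l then w else 0) * x j l)
      = (\<Sum>j\<in>S. if g = j then w * x j h else 0)"
  proof (rule sum.cong)
    fix j assume "j \<in> S"
    show "(\<Sum>l\<in>L. (if g = j \<and> h = l then w else 0) * x j l) = (if g = j then w * x j h else 0)"
    proof (cases "g = j")
      case True
      have "(\<Sum>l\<in>L. (if g = j \<and> h = l then w else 0) * x j l) = (\<Sum>l\<in>L. if h = l then w * x j l else 0)"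
        using True by (intro sum.cong) auto
      also have "\<dots> = w * x j h" using assms(2) gh by (simp add: sum.delta)
      finally show ?thesis using True by simp
    qed simp
  qed simp
  also have "\<dots> = w * x g h" using assms(1) gh by (simp add: sum.delta)
  finally show ?thesis by simp
qed

lemma regroup:
  fixes x :: "nat \<Rightarrow> nat \<Rightarrow> 'a::field"
  assumes "finite S" "finite L" "finite Q" "\<forall>q\<in>Q. w q \<noteq> 0 \<longrightarrow> G q \<in> S \<and> H q \<in> L"
  shows "(\<Sum>q\<in>Q. w q * x (G q) (H q)) =
    (\<Sum>j\<in>S. \<Sum>l\<in>L. (\<Sum>q\<in>Q. if G q = j \<and> H q = l then w q else 0) * x j l)"
proof -
  have "(\<Sum>q\<in>Q. w q * x (G q) (H q)) = (\<Sum>q\<in>Q. \<Sum>j\<in>S. \<Sum>l\<in>L. (if G q = j \<and> H q = l then w q else 0) * x j l)"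
  proof (rule sum.cong)
    fix q assume "q \<in> Q"
    thus "w q * x (G q) (H q) = (\<Sum>j\<in>S. \<Sum>l\<in>L. (if G q = j \<and> H q = l then w q else 0) * x j l)"
      using regroup_one[OF assms(1,2), of "w q" "G q" "H q" x] assms(4) by blast
  qed simp
  also have "\<dots> = (\<Sum>j\<in>S. \<Sum>q\<in>Q. \<Sum>l\<in>L. (if G q = j \<and> H q = l then w q else 0) * x j l)"
    by (rule sum.swap)
  also have "\<dots> = (\<Sum>j\<in>S. \<Sum>l\<in>L. \<Sum>q\<in>Q. (if G q = j \<and> H q = l then w q else 0) * x j l)"
    by (intro sum.cong refl sum.swap)
  also have "\<dots> = (\<Sum>j\<in>S. \<Sum>l\<in>L. (\<Sum>q\<in>Q. if G q = j \<and> H q = l then w q else 0) * x j l)"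
    by (simp add: sum_distrib_right)
  finally show ?thesis .
qed



lemma dbound_s0:
  fixes a u i i' j' j0 U :: nat
  assumes a0: "0 < a" and hu: "a * u = U + 1" and i: "1 \<le> i" "i \<le> u" and i': "1 \<le> i'" "i' \<le> u"
    and j: "j' < a" "j0 < a" and ne: "(i', j') \<noteq> (i, j0)"
  defines "d \<equiv> int a * (int i - int i') + int j' - int j0"
  shows "(1 \<le> d \<and> d \<le> int U) \<or> (d \<le> -1 \<and> - d \<le> int U)"
proof -
  have hu': "int a * int u = int U + 1" using hu by (metis of_nat_1 of_nat_add of_nat_mult)
  define e where "e = int i - int i'"
  have dd: "d = int a * e + int j' - int j0" unfolding d_def e_def ..
  consider "e = 0" | "1 \<le> e" | "e \<le> -1" by linarith
  thus ?thesis
  proof cases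
    case 1
    hence "j' \<noteq> j0" using ne unfolding e_def by auto
    moreover have "int a \<le> int a * int u" using mult_left_mono[of 1 "int u" "int a"] i by simp
    moreover have d1: "d = int j' - int j0" using dd 1 by simp
    ultimately have f: "j' \<noteq> j0" "int a \<le> int a * int u" "d = int j' - int j0" by auto
    show ?thesis
    proof (cases "j' < j0")
      case True thus ?thesis using f j hu' by (intro disjI2 conjI; linarith)
    next
      case False thus ?thesis using f j hu' by (intro disjI1 conjI; linarith)
    qed
  next
    case 2
    have l: "int a \<le> int a * e" using mult_left_mono[of 1 e "int a"] 2 by simp
    have h: "int a * e \<le> int a * (int u - 1)" using i i' unfolding e_def by (intro mult_left_mono) auto
    have "int a * (int u - 1) = int U + 1 - int a" using hu' by (simp add: algebra_simps)
    thus ?thesis using l h dd j by (intro disjI1 conjI; linarith)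
  next
    case 3
    have l: "int a * e \<le> - int a" using mult_left_mono[of e "-1" "int a"] 3 by simp
    have h: "int a * (- (int u - 1)) \<le> int a * e" using i i' unfolding e_def by (intro mult_left_mono) auto
    have "int a * (- (int u - 1)) = - (int U + 1 - int a)" using hu' by (simp add: algebra_simps)
    thus ?thesis using l h dd j by (intro disjI2 conjI; linarith)
  qed
qed

lemma dbound_kn:
  fixes a u dl \<mu> i' j' j0 U D :: nat
  assumes a0: "0 < a" and hu: "a * u = U + 1" and hD: "a * dl = D - U" and UD: "U \<le> D"
    and \<mu>: "\<mu> < dl" and i': "1 \<le> i'" "i' \<le> u" and j: "j' < a" "j0 < a"
  defines "d \<equiv> int a * (int u + int \<mu> + 1 - int i') + int j' - int j0"
  shows "1 \<le> d \<and> d \<le> int D"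
proof -
  have hu': "int a * int u = int U + 1" using hu by (metis of_nat_1 of_nat_add of_nat_mult)
  have hD': "int a * int dl = int D - int U" using hD UD by (metis of_nat_diff of_nat_mult)
  define e where "e = int u + int \<mu> + 1 - int i'"
  have l: "int a \<le> int a * e" using mult_left_mono[of 1 e "int a"] i' unfolding e_def by simp
  have h: "int a * e \<le> int a * (int u + int dl - 1)" using i' \<mu> unfolding e_def by (intro mult_left_mono) auto
  have "int a * (int u + int dl - 1) = int D + 1 - int a" using hu' hD' by (simp add: algebra_simps)
  hence "int a * e \<le> int D + 1 - int a" using h by linarith
  thus ?thesis using l j unfolding d_def e_def[symmetric] by (intro conjI; linarith)
qed



lemma decode_main:
  fixes K D U a u dl m n k i :: nat
  assumes a0: "0 < a" and hu: "a * u = U + 1" and hD: "a * dl = D - U" and hm: "a * m = K"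
    and nd: "n = m - dl" and n0: "0 < n" and nm: "n \<le> m" and un: "u \<le> n" and UD: "U \<le> D"
    and k: "k < K" and i: "1 \<le> i" "i \<le> u"
  shows "\<exists>(\<alpha>::nat \<Rightarrow> 'a::{field,finite}) (\<beta>::nat \<Rightarrow> nat \<Rightarrow> 'a). \<forall>x::nat \<Rightarrow> nat \<Rightarrow> 'a. x k i =
     (\<Sum>t<n. \<alpha> t * (\<Sum>s<m. (\<Sum>i'\<in>{1..u}. \<Sum>j'<a. x (nat ((int a * (int s + 1 - int i') + int j') mod int K)) i') * AIR m n s t)) +
     (\<Sum>j\<in>side_info K D U k. \<Sum>l\<in>{1..u}. \<beta> j l * x j l)"
proof -
  define s' where "s' = k div a"
  define j0 where "j0 = k mod a"
  have hk: "k = a * s' + j0" unfolding s'_def j0_def by simp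
  have j0a: "j0 < a" unfolding j0_def using a0 by simp
  have "a * s' < a * m" using hk k hm by linarith
  hence s'm: "s' < m" by simp
  have m0: "0 < m" using s'm by simp
  have K0: "0 < K" using k by simp
  define s0 where "s0 = (s' + i - 1) mod m"
  define jst where "jst = (s0 + (u - i) + dl + 1) mod m"
  define \<tau>0 where "\<tau>0 = n - (u - i) - 1"
  have s0m: "s0 < m" unfolding s0_def using m0 by simp
  have jstm: "jst < m" unfolding jst_def using m0 by simp
  have \<tau>0n: "\<tau>0 < n" unfolding \<tau>0_def using n0 by simp
  obtain \<alpha> :: "nat \<Rightarrow> 'a" where \<alpha>: "\<forall>\<tau><n. (\<Sum>t<n. (AIR m n ((jst+\<tau>) mod m) t :: 'a) * \<alpha> t) = (if \<tau> = \<tau>0 then 1 else 0)"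
    using air_decode[OF n0 nm jstm \<tau>0n, where 'a='a] by blast
  define v where "v s = (\<Sum>t<n. (AIR m n s t :: 'a) * \<alpha> t)" for s
  have F1: "(jst + \<tau>0) mod m = s0"
  proof -
    have "(jst + \<tau>0) mod m = (s0 + (u - i) + dl + 1 + \<tau>0) mod m" unfolding jst_def by (simp add: mod_add_left_eq)
    also have "s0 + (u - i) + dl + 1 + \<tau>0 = s0 + m" unfolding \<tau>0_def using nd un i nm by linarith
    finally show ?thesis using s0m by simp
  qed
  have vs0: "v s0 = 1" using \<alpha> \<tau>0n F1 unfolding v_def by (metis (full_types))
  have F2: "s = s0 \<or> (\<exists>\<mu><dl. s = (s' + u + \<mu>) mod m)" if sm: "s < m" and vs: "v s \<noteq> 0" for s
  proof -
    define \<tau> where "\<tau> = (s + m - jst) mod m"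
    have \<tau>m: "\<tau> < m" unfolding \<tau>_def using m0 by simp
    have h\<tau>: "(jst + \<tau>) mod m = s"
    proof -
      have "(jst + \<tau>) mod m = (jst + (s + m - jst)) mod m" unfolding \<tau>_def by (simp add: mod_add_right_eq)
      also have "jst + (s + m - jst) = s + m" using jstm by simp
      finally show ?thesis using sm by simp
    qed
    show ?thesis
    proof (cases "\<tau> < n")
      case True
      have "v s = (if \<tau> = \<tau>0 then 1 else 0)" using \<alpha> True h\<tau> unfolding v_def by metis
      hence "\<tau> = \<tau>0" using vs by (metis)
      thus ?thesis using h\<tau> F1 by simp
    next
      case False
      define \<mu> where "\<mu> = \<tau> - n"
      have \<mu>: "\<mu> < dl" unfolding \<mu>_def using False \<tau>m nd nm by linarith
      have "s = (s0 + (u - i) + dl + 1 + \<tau>) mod m" using h\<tau> unfolding jst_def by (simp add: mod_add_left_eq)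
      also have "s0 + (u - i) + dl + 1 + \<tau> = s0 + ((u - i) + 1 + \<mu>) + m"
        unfolding \<mu>_def using False nd nm n0 by linarith
      also have "(s0 + ((u - i) + 1 + \<mu>) + m) mod m = (s0 + ((u - i) + 1 + \<mu>)) mod m" by (rule mod_add_self2)
      also have "\<dots> = (s' + i - 1 + ((u - i) + 1 + \<mu>)) mod m" unfolding s0_def by (rule mod_add_left_eq)
      also have "s' + i - 1 + ((u - i) + 1 + \<mu>) = s' + u + \<mu>" using i by linarith
      finally show ?thesis using \<mu> by blast
    qed
  qed
  define g where "g s i' j' = nat ((int a * (int s + 1 - int i') + int j') mod int K)" for s i' j' :: nat
  have gcong: "g (N mod m) i' j' = nat ((int a * (int N + 1 - int i') + int j') mod int K)" for N i' j'
    unfolding g_def using idx_cong[OF m0, of a N i' j'] hm by simp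
  define T where "T = {..<m} \<times> ({1..u} \<times> {..<a})"
  define wq where "wq = (\<lambda>(s::nat, i'::nat, j'::nat). v s)"
  define G where "G = (\<lambda>(s, i', j'). g s i' j')"
  define H where "H = (\<lambda>(s::nat, i'::nat, j'::nat). i')"
  define q0 where "q0 = (s0, i, j0)"
  have fT: "finite T" unfolding T_def by simp
  have q0T: "q0 \<in> T" unfolding q0_def T_def using s0m i j0a by auto
  have Gq0: "G q0 = k"
  proof -
    have "G q0 = g ((s' + i - 1) mod m) i j0" unfolding G_def q0_def s0_def by simp
    also have "\<dots> = nat ((int a * (int (s' + i - 1) + 1 - int i) + int j0) mod int K)" by (rule gcong)
    also have "int a * (int (s' + i - 1) + 1 - int i) + int j0 = int k"
      using i hk by (simp add: of_nat_diff algebra_simps)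
    finally show ?thesis using k by simp
  qed
  have C3: "\<forall>q\<in>T - {q0}. wq q \<noteq> 0 \<longrightarrow> G q \<in> side_info K D U k \<and> H q \<in> {1..u}"
  proof (intro ballI impI)
    fix q assume qT: "q \<in> T - {q0}" and wq: "wq q \<noteq> 0"
    obtain s i' j' where q: "q = (s, i', j')" using prod_cases3 by blast
    have sm: "s < m" and i': "1 \<le> i'" "i' \<le> u" and j': "j' < a" using qT q unfolding T_def by auto
    have vs: "v s \<noteq> 0" using wq q unfolding wq_def by simp
    have Hq: "H q \<in> {1..u}" using q i' unfolding H_def by simp
    have "G q \<in> side_info K D U k"
    proof (cases "s = s0")
      case True
      have ne: "(i', j') \<noteq> (i, j0)" using qT q True unfolding q0_def by auto
      define d where "d = int a * (int i - int i') + int j' - int j0"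
      have "G q = g ((s' + i - 1) mod m) i' j'" unfolding G_def q True s0_def by simp
      also have "\<dots> = nat ((int a * (int (s' + i - 1) + 1 - int i') + int j') mod int K)" by (rule gcong)
      also have "int a * (int (s' + i - 1) + 1 - int i') + int j' = int k + d"
        unfolding d_def using i hk by (simp add: of_nat_diff algebra_simps)
      finally have Gd: "G q = nat ((int k + d) mod int K)" .
      have "(1 \<le> d \<and> d \<le> int U) \<or> (d \<le> -1 \<and> - d \<le> int U)"
        unfolding d_def by (rule dbound_s0[OF a0 hu i i' j' j0a ne])
      thus ?thesis
      proof
        assume "1 \<le> d \<and> d \<le> int U"
        thus ?thesis unfolding Gd using UD by (intro si_pos) auto
      next
        assume "d \<le> -1 \<and> - d \<le> int U"
        thus ?thesis unfolding Gd by (intro si_neg) auto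
      qed
    next
      case False
      then obtain \<mu> where \<mu>: "\<mu> < dl" "s = (s' + u + \<mu>) mod m" using F2[OF sm vs] by blast
      define d where "d = int a * (int u + int \<mu> + 1 - int i') + int j' - int j0"
      have "G q = g ((s' + u + \<mu>) mod m) i' j'" unfolding G_def q \<mu>(2) by simp
      also have "\<dots> = nat ((int a * (int (s' + u + \<mu>) + 1 - int i') + int j') mod int K)" by (rule gcong)
      also have "int a * (int (s' + u + \<mu>) + 1 - int i') + int j' = int k + d"
        unfolding d_def using hk by (simp add: algebra_simps)
      finally have Gd: "G q = nat ((int k + d) mod int K)" .
      have "1 \<le> d \<and> d \<le> int D" unfolding d_def by (rule dbound_kn[OF a0 hu hD UD \<mu>(1) i' j' j0a])
      thus ?thesis unfolding Gd by (intro si_pos) auto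
    qed
    thus "G q \<in> side_info K D U k \<and> H q \<in> {1..u}" using Hq by simp
  qed
  define \<beta> where "\<beta> j l = - (\<Sum>q\<in>T - {q0}. if G q = j \<and> H q = l then wq q else 0)" for j l
  have main: "x k i =
     (\<Sum>t<n. \<alpha> t * (\<Sum>s<m. (\<Sum>i'\<in>{1..u}. \<Sum>j'<a. x (nat ((int a * (int s + 1 - int i') + int j') mod int K)) i') * AIR m n s t)) +
     (\<Sum>j\<in>side_info K D U k. \<Sum>l\<in>{1..u}. \<beta> j l * x j l)" for x :: "nat \<Rightarrow> nat \<Rightarrow> 'a"
  proof -
    define Y where "Y s = (\<Sum>i'\<in>{1..u}. \<Sum>j'<a. x (g s i' j') i')" for s
    have "(\<Sum>t<n. \<alpha> t * (\<Sum>s<m. Y s * AIR m n s t)) = (\<Sum>t<n. \<Sum>s<m. Y s * (AIR m n s t * \<alpha> t))"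
      by (simp add: sum_distrib_left mult_ac)
    also have "\<dots> = (\<Sum>s<m. \<Sum>t<n. Y s * (AIR m n s t * \<alpha> t))" by (rule sum.swap)
    also have "\<dots> = (\<Sum>s<m. v s * Y s)" by (simp add: v_def sum_distrib_left mult_ac)
    also have "\<dots> = (\<Sum>s<m. \<Sum>i'\<in>{1..u}. \<Sum>j'<a. v s * x (g s i' j') i')"
      unfolding Y_def by (simp add: sum_distrib_left)
    also have "\<dots> = (\<Sum>s<m. \<Sum>(i',j')\<in>{1..u} \<times> {..<a}. v s * x (g s i' j') i')"
      by (simp add: sum.cartesian_product)
    also have "\<dots> = (\<Sum>(s,p)\<in>T. (case p of (i', j') \<Rightarrow> v s * x (g s i' j') i'))"
      unfolding T_def by (simp add: sum.cartesian_product)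
    also have "\<dots> = (\<Sum>q\<in>T. wq q * x (G q) (H q))"
    proof (rule sum.cong[OF refl])
      fix q assume "q \<in> T"
      obtain s i' j' where q: "q = (s, i', j')" using prod_cases3 by blast
      show "(case q of (s, p) \<Rightarrow> (case p of (i', j') \<Rightarrow> v s * x (g s i' j') i')) = wq q * x (G q) (H q)"
        unfolding q wq_def G_def H_def by simp
    qed
    also have "\<dots> = wq q0 * x (G q0) (H q0) + (\<Sum>q\<in>T - {q0}. wq q * x (G q) (H q))"
      by (rule sum.remove[OF fT q0T])
    also have "wq q0 * x (G q0) (H q0) = x k i" unfolding q0_def wq_def H_def using vs0 Gq0[unfolded q0_def] by simp
    also have "(\<Sum>q\<in>T - {q0}. wq q * x (G q) (H q)) =
       (\<Sum>j\<in>side_info K D U k. \<Sum>l\<in>{1..u}. (\<Sum>q\<in>T - {q0}. if G q = j \<and> H q = l then wq q else 0) * x j l)"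
      by (rule regroup[OF si_fin[OF K0] _ _ C3]) (use fT in auto)
    also have "\<dots> = - (\<Sum>j\<in>side_info K D U k. \<Sum>l\<in>{1..u}. \<beta> j l * x j l)"
      unfolding \<beta>_def by (simp add: sum_negf)
    finally have "(\<Sum>t<n. \<alpha> t * (\<Sum>s<m. Y s * AIR m n s t)) =
        x k i - (\<Sum>j\<in>side_info K D U k. \<Sum>l\<in>{1..u}. \<beta> j l * x j l)" by simp
    thus ?thesis unfolding Y_def g_def by (simp add: algebra_simps)
  qed
  show ?thesis using main by blast
qed



theorem theorem1:
  fixes K D U :: nat
  assumes "U \<le> D" and "U + D + 2 \<le> K"
  shows "(\<forall>k<K. lin_decodable TYPE('a::{field,finite}) K D U k) \<and>
         0 < K_a K D U - Delta_a K D U \<and>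
         real (u_a K D U) / real (K_a K D U - Delta_a K D U)
           = real (U + 1) / real (K - D + U)"
proof -
  define a where "a = par_a K D U"
  define u where "u = u_a K D U"
  define dl where "dl = Delta_a K D U"
  define m where "m = K_a K D U"
  define n where "n = m - dl"
  have a0: "0 < a" unfolding a_def par_a_def by simp
  have dK: "a dvd K" unfolding a_def par_a_def by simp
  have dDU: "a dvd D - U" unfolding a_def par_a_def by (meson gcd_dvd1 gcd_dvd2 dvd_trans)
  have dU: "a dvd U + 1" unfolding a_def par_a_def by (meson gcd_dvd1 gcd_dvd2 dvd_trans)
  have hu: "a * u = U + 1" unfolding u_def u_a_def a_def[symmetric] using dU by simp
  have hD: "a * dl = D - U" unfolding dl_def Delta_a_def a_def[symmetric] using dDU by simp
  have hm: "a * m = K" unfolding m_def K_a_def a_def[symmetric] using dK by simp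
  have "a * dl < a * m" using hD hm assms by linarith
  hence dm: "dl < m" by simp
  have n0: "0 < n" and nm: "n \<le> m" unfolding n_def using dm by auto
  have an: "a * n = K - D + U"
  proof -
    have "a * n = a * m - a * dl" unfolding n_def by (simp add: diff_mult_distrib2)
    thus ?thesis using hm hD assms by linarith
  qed
  have "a * u \<le> a * n" using hu an assms by linarith
  hence un: "u \<le> n" using a0 by simp
  have P1: "\<forall>k<K. lin_decodable TYPE('a::{field,finite}) K D U k"
    unfolding lin_decodable_def code_sym_def y_sym_def a_def[symmetric] u_def[symmetric]
      m_def[symmetric] dl_def[symmetric] n_def[symmetric]
  proof (intro allI impI ballI)
    fix k i assume k: "k < K" and i: "i \<in> {1..u}"
    show "\<exists>(\<alpha>::nat \<Rightarrow> 'a) (\<beta>::nat \<Rightarrow> nat \<Rightarrow> 'a). \<forall>x::nat \<Rightarrow> nat \<Rightarrow> 'a. x k i =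
     (\<Sum>t<n. \<alpha> t * (\<Sum>s<m. (\<Sum>i'\<in>{1..u}. \<Sum>j'<a. x (nat ((int a * (int s + 1 - int i') + int j') mod int K)) i') * AIR m n s t)) +
     (\<Sum>j\<in>side_info K D U k. \<Sum>l\<in>{1..u}. \<beta> j l * x j l)"
      using decode_main[OF a0 hu hD hm n_def n0 nm un assms(1) k, of i] i by auto
  qed
  have P2: "0 < K_a K D U - Delta_a K D U" using n0 unfolding n_def m_def dl_def .
  have "real (U + 1) / real (K - D + U) = (real a * real u) / (real a * real n)"
    using hu an by (metis of_nat_mult)
  also have "\<dots> = real u / real n" using a0 by simp
  finally have P3: "real (u_a K D U) / real (K_a K D U - Delta_a K D U) = real (U + 1) / real (K - D + U)"
    unfolding u_def n_def m_def dl_def by simp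
  show ?thesis using P1 P2 P3 by blast
qed


end
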